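(* Let $D$ be an $S$-subalgebra of $\mathbb{C}\langle u,v\rangle$ containing $s_1=uv+vu$, and let $b\ge 1$, $c\ge 0$ be integers such that $p_{(b,c)}=u^bv^c+v^bu^c\in D$. Then $uvu^bv^c+vuv^bu^c\in D$ and $p_{(b+1,c+1)}=u^{b+1}v^{c+1}+v^{b+1}u^{c+1}\in D$. In particular, if $D$ contains $s_1$, then $D$ contains $s_a=u^av^a+v^au^a$ for every $a\ge 1$.
   Context: $\mathbb{C}\langle u,v\rangle$ is the free associative unital algebra over $\mathbb C$ on noncommuting $u,v$, with homogeneous components $\mathbb{C}\langle u,v\rangle^{(k)}$ of total degree $k$. For each $k$, $\mathrm{Sym}(k)$ acts on $\mathbb{C}\langle u,v\rangle^{(k)}$ by permuting positions: $(x_{i_1}\cdots x_{i_k})\circ\pi=x_{i_{\pi^{-1}(1)}}\cdots x_{i_{\pi^{-1}(k)}}$ for monomials with $x_{i_j}\in\{u,v\}$, extended linearly. An $S$-subalgebra is a graded unital subalgebra $F=\bigoplus_kF^{(k)}$ with $F^{(k)}\circ\mathrm{Sym}(k)=F^{(k)}$ for all $k$. *)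

theory Defs
  imports Complex_Main "HOL-Combinatorics.Permutations"
begin

text \<open>Elements of the free algebra C<u,v>: finitely supported coefficient functions on
words over the alphabet {u,v}; the letter u is True, v is False.\<close>

type_synonym ncpoly = "bool list \<Rightarrow> complex"

definition ncpolys :: "ncpoly set" where
  "ncpolys = {f. finite {w. f w \<noteq> 0}}"

definition nc_add :: "ncpoly \<Rightarrow> ncpoly \<Rightarrow> ncpoly" where
  "nc_add f g = (\<lambda>w. f w + g w)"

definition nc_smult :: "complex \<Rightarrow> ncpoly \<Rightarrow> ncpoly" where
  "nc_smult c f = (\<lambda>w. c * f w)"

definition nc_mult :: "ncpoly \<Rightarrow> ncpoly \<Rightarrow> ncpoly" where
  "nc_mult f g = (\<lambda>w. \<Sum>i\<le>length w. f (take i w) * g (drop i w))"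

definition nc_mon :: "bool list \<Rightarrow> ncpoly" where
  "nc_mon x = (\<lambda>w. if w = x then 1 else 0)"

abbreviation u_letter :: bool where "u_letter \<equiv> True"
abbreviation v_letter :: bool where "v_letter \<equiv> False"

definition nc_hom :: "nat \<Rightarrow> ncpoly \<Rightarrow> ncpoly" where
  "nc_hom k f = (\<lambda>w. if length w = k then f w else 0)"

definition homogeneous_of :: "nat \<Rightarrow> ncpoly \<Rightarrow> bool" where
  "homogeneous_of k f \<longleftrightarrow> (\<forall>w. length w \<noteq> k \<longrightarrow> f w = 0)"

text \<open>Action of pi in Sym(k) (permutations of positions 0..k-1) on degree-k elements:
  the monomial x_{i_1}...x_{i_k} goes to x_{i_{pi^{-1}(1)}}...x_{i_{pi^{-1}(k)}}, extended linearly.\<close>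
definition sym_act :: "nat \<Rightarrow> (nat \<Rightarrow> nat) \<Rightarrow> ncpoly \<Rightarrow> ncpoly" where
  "sym_act k \<pi> f = (\<lambda>w. if length w = k then f (map (\<lambda>i. w ! (\<pi> i)) [0..<k]) else 0)"

definition component :: "ncpoly set \<Rightarrow> nat \<Rightarrow> ncpoly set" where
  "component F k = {f \<in> F. homogeneous_of k f}"

definition unital_subalgebra :: "ncpoly set \<Rightarrow> bool" where
  "unital_subalgebra F \<longleftrightarrow> F \<subseteq> ncpolys \<and> nc_mon [] \<in> F \<and> (\<lambda>w. 0) \<in> F
     \<and> (\<forall>f\<in>F. \<forall>g\<in>F. nc_add f g \<in> F \<and> nc_mult f g \<in> F)
     \<and> (\<forall>c. \<forall>f\<in>F. nc_smult c f \<in> F)"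

definition graded :: "ncpoly set \<Rightarrow> bool" where
  "graded F \<longleftrightarrow> (\<forall>f\<in>F. \<forall>k. nc_hom k f \<in> F)"

definition S_subalgebra :: "ncpoly set \<Rightarrow> bool" where
  "S_subalgebra F \<longleftrightarrow> unital_subalgebra F \<and> graded F \<and>
     (\<forall>k. {sym_act k \<pi> f | f \<pi>. f \<in> component F k \<and> \<pi> permutes {..<k}} = component F k)"

definition uv_word :: "nat \<Rightarrow> nat \<Rightarrow> bool list" where
  "uv_word a b = replicate a u_letter @ replicate b v_letter"

definition vu_word :: "nat \<Rightarrow> nat \<Rightarrow> bool list" where
  "vu_word a b = replicate a v_letter @ replicate b u_letter"

definition p_poly :: "nat \<Rightarrow> nat \<Rightarrow> ncpoly" where
  "p_poly b c = nc_add (nc_mon (uv_word b c)) (nc_mon (vu_word b c))"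

definition s_poly :: "nat \<Rightarrow> ncpoly" where
  "s_poly a = p_poly a a"

end

theory Submission
  imports Defs
begin

lemma hom_mon: "length x = k \<Longrightarrow> homogeneous_of k (nc_mon x)"
  by (auto simp: homogeneous_of_def nc_mon_def)

lemma hom_add: "homogeneous_of k f \<Longrightarrow> homogeneous_of k g \<Longrightarrow> homogeneous_of k (nc_add f g)"
  by (auto simp: homogeneous_of_def nc_add_def)

lemma act_closed:
  assumes "S_subalgebra D" "f \<in> D" "homogeneous_of k f" "\<pi> permutes {..<k}"
  shows "sym_act k \<pi> f \<in> D"
proof -
  have "sym_act k \<pi> f \<in> {sym_act k \<pi> f | f \<pi>. f \<in> component D k \<and> \<pi> permutes {..<k}}"
    using assms by (auto simp: component_def)
  also have "\<dots> = component D k" using assms(1) unfolding S_subalgebra_def by blast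
  finally show ?thesis by (simp add: component_def)
qed

lemma D_add: "S_subalgebra D \<Longrightarrow> f \<in> D \<Longrightarrow> g \<in> D \<Longrightarrow> nc_add f g \<in> D"
  by (auto simp: S_subalgebra_def unital_subalgebra_def)
lemma D_mult: "S_subalgebra D \<Longrightarrow> f \<in> D \<Longrightarrow> g \<in> D \<Longrightarrow> nc_mult f g \<in> D"
  by (auto simp: S_subalgebra_def unital_subalgebra_def)
lemma D_smult: "S_subalgebra D \<Longrightarrow> f \<in> D \<Longrightarrow> nc_smult c f \<in> D"
  by (auto simp: S_subalgebra_def unital_subalgebra_def)

lemma sym_act_add: "sym_act k \<pi> (nc_add f g) = nc_add (sym_act k \<pi> f) (sym_act k \<pi> g)"
  by (auto simp: sym_act_def nc_add_def)

definition sw :: "nat \<Rightarrow> nat \<Rightarrow> bool list \<Rightarrow> bool list" where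
  "sw a b x = x[a := x!b, b := x!a]"

lemma sym_act_mon:
  assumes "a < length x" "b < length x"
  shows "sym_act (length x) (transpose a b) (nc_mon x) = nc_mon (sw a b x)"
proof
  fix w
  let ?k = "length x"
  let ?t = "transpose a b"
  have inv: "\<And>i. ?t (?t i) = i" by (simp add: transpose_def)
  have lt: "\<And>i. i < ?k \<Longrightarrow> ?t i < ?k" using assms by (simp add: transpose_def)
  have swm: "sw a b x = map (\<lambda>i. x ! ?t i) [0..<?k]"
    by (rule nth_equalityI) (use assms in \<open>auto simp: sw_def nth_list_update transpose_def\<close>)
  show "sym_act ?k ?t (nc_mon x) w = nc_mon (sw a b x) w"
  proof (cases "length w = ?k")
    case False
    then show ?thesis by (auto simp: sym_act_def nc_mon_def swm)
  next
    case True
    have "(map (\<lambda>i. w ! ?t i) [0..<?k] = x) \<longleftrightarrow> (w = map (\<lambda>i. x ! ?t i) [0..<?k])"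
    proof
      assume h: "map (\<lambda>i. w ! ?t i) [0..<?k] = x"
      show "w = map (\<lambda>i. x ! ?t i) [0..<?k]"
      proof (rule nth_equalityI)
        show "length w = length (map (\<lambda>i. x ! ?t i) [0..<?k])" using True by simp
        fix i assume "i < length w"
        then have "i < ?k" using True by simp
        have "x ! ?t i = map (\<lambda>i. w ! ?t i) [0..<?k] ! ?t i" using h by simp
        also have "\<dots> = w ! i" using lt[OF \<open>i < ?k\<close>] inv[of i] by simp
        finally show "w ! i = map (\<lambda>i. x ! ?t i) [0..<?k] ! i"
          using \<open>i < ?k\<close> by simp
      qed
    next
      assume h: "w = map (\<lambda>i. x ! ?t i) [0..<?k]"
      show "map (\<lambda>i. w ! ?t i) [0..<?k] = x"
        by (rule nth_equalityI) (use h lt inv in auto)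
    qed
    then show ?thesis using True by (simp add: sym_act_def nc_mon_def swm)
  qed
qed

lemma mult_mon: "nc_mult (nc_mon x) (nc_mon y) = nc_mon (x @ y)"
proof
  fix w
  show "nc_mult (nc_mon x) (nc_mon y) w = nc_mon (x @ y) w"
  proof (cases "w = x @ y")
    case True
    have "(\<Sum>i\<le>length w. nc_mon x (take i w) * nc_mon y (drop i w))
        = nc_mon x (take (length x) w) * nc_mon y (drop (length x) w)"
    proof (rule sum.remove[of _ "length x", THEN trans])
      show "finite {..length w}" by simp
      show "length x \<in> {..length w}" using True by simp
      have "\<forall>i\<in>{..length w} - {length x}. nc_mon x (take i w) * nc_mon y (drop i w) = 0"
      proof
        fix i assume i: "i \<in> {..length w} - {length x}"
        have "take i w \<noteq> x"
        proof
          assume "take i w = x"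
          then have "length (take i w) = length x" by simp
          then show False using i by auto
        qed
        then show "nc_mon x (take i w) * nc_mon y (drop i w) = 0" by (simp add: nc_mon_def)
      qed
      then show "nc_mon x (take (length x) w) * nc_mon y (drop (length x) w) +
          (\<Sum>i\<in>{..length w} - {length x}. nc_mon x (take i w) * nc_mon y (drop i w)) =
          nc_mon x (take (length x) w) * nc_mon y (drop (length x) w)"
        using sum.neutral by (metis (no_types, lifting) add.right_neutral)
    qed
    then show ?thesis using True by (simp add: nc_mult_def nc_mon_def)
  next
    case False
    have "\<And>i. nc_mon x (take i w) * nc_mon y (drop i w) = 0"
      using False by (auto simp: nc_mon_def)
    then have "(\<Sum>i\<le>length w. nc_mon x (take i w) * nc_mon y (drop i w)) = 0"
      by (intro sum.neutral) blast
    then show ?thesis using False unfolding nc_mult_def by (simp add: nc_mon_def[of "x@y"])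
  qed
qed

lemma mult_add_l: "nc_mult (nc_add f g) h = nc_add (nc_mult f h) (nc_mult g h)"
  by (auto simp: nc_mult_def nc_add_def distrib_right sum.distrib)
lemma mult_add_r: "nc_mult h (nc_add f g) = nc_add (nc_mult h f) (nc_mult h g)"
  by (auto simp: nc_mult_def nc_add_def distrib_left sum.distrib)

lemma sym_act_mon': "length x = k \<Longrightarrow> a < k \<Longrightarrow> b < k \<Longrightarrow>
   sym_act k (transpose a b) (nc_mon x) = nc_mon (sw a b x)"
  using sym_act_mon by blast

lemma step1:
  assumes D: "S_subalgebra D" and s1: "s_poly 1 \<in> D" and p: "p_poly (Suc n) c \<in> D"
  shows "nc_add (nc_mon (True # False # True # replicate n True @ replicate c False))
                (nc_mon (False # True # False # replicate n False @ replicate c True)) \<in> D"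
proof -
  define r1 where "r1 = replicate n True @ replicate c False"
  define r2 where "r2 = replicate n False @ replicate c True"
  define k where "k = n + c + 3"
  define A where "A = True # False # True # r1"
  define B where "B = True # False # False # r2"
  define C where "C = False # True # True # r1"
  define E where "E = False # True # False # r2"
  define B' where "B' = False # False # True # r2"
  define C' where "C' = True # True # False # r1"
  have len: "length A = k" "length B = k" "length C = k" "length E = k" "length B' = k" "length C' = k"
    by (simp_all add: A_def B_def C_def E_def B'_def C'_def r1_def r2_def k_def)
  have k2: "2 < k" "0 < k" "1 < k" by (simp_all add: k_def)
  have hA: "\<And>x. length x = k \<Longrightarrow> homogeneous_of k (nc_mon x)" by (rule hom_mon)
  define f where "f = nc_add (nc_add (nc_mon A) (nc_mon C)) (nc_add (nc_mon B) (nc_mon E))"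
  have "nc_mult (s_poly 1) (p_poly (Suc n) c) = f"
    by (simp add: f_def s_poly_def p_poly_def uv_word_def vu_word_def mult_add_l mult_add_r mult_mon
        A_def B_def C_def E_def r1_def r2_def)
  then have fD: "f \<in> D" using D_mult[OF D s1 p] by simp
  have fh: "homogeneous_of k f" unfolding f_def using len by (intro hom_add hom_mon) auto
  define g where "g = nc_add (nc_add (nc_mon A) (nc_mon C')) (nc_add (nc_mon B') (nc_mon E))"
  have "sym_act k (transpose 0 2) f = g"
    unfolding f_def g_def sym_act_add using len k2
    by (simp add: sym_act_mon' sw_def A_def B_def C_def E_def B'_def C'_def numeral_2_eq_2)
  then have gD: "g \<in> D" using act_closed[OF D fD fh, of "transpose 0 2"] k2
    by (simp add: permutes_swap_id)
  have gh: "homogeneous_of k g" unfolding g_def using len by (intro hom_add hom_mon) auto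
  define h where "h = nc_add (nc_add (nc_mon C) (nc_mon C')) (nc_add (nc_mon B') (nc_mon B))"
  have "sym_act k (transpose 0 1) g = h"
    unfolding h_def g_def sym_act_add using len k2
    by (simp add: sym_act_mon' sw_def A_def B_def C_def E_def B'_def C'_def)
  then have hD: "h \<in> D" using act_closed[OF D gD gh, of "transpose 0 1"] k2
    by (simp add: permutes_swap_id)
  have "nc_smult (1/2) (nc_add (nc_add g (nc_smult (-1) h)) f) \<in> D"
    by (intro D_smult D_add fD gD hD D)
  moreover have "nc_smult (1/2) (nc_add (nc_add g (nc_smult (-1) h)) f) = nc_add (nc_mon A) (nc_mon E)"
    by (rule ext) (simp add: nc_smult_def nc_add_def f_def g_def h_def algebra_simps)
  ultimately show ?thesis by (simp add: A_def E_def r1_def r2_def)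
qed

lemma rep_upd: "(replicate (Suc n) a @ ys)[n := z] = replicate n a @ z # ys"
  by (induction n) auto
lemma rep_nth: "(replicate (Suc n) a @ ys) ! n = a"
  by (induction n) auto

lemma step2:
  assumes D: "S_subalgebra D"
    and X: "nc_add (nc_mon (True # False # True # replicate n True @ replicate c False))
                (nc_mon (False # True # False # replicate n False @ replicate c True)) \<in> D"
  shows "p_poly (Suc n + 1) (c + 1) \<in> D"
proof -
  define A where "A = True # False # True # replicate n True @ replicate c False"
  define E where "E = False # True # False # replicate n False @ replicate c True"
  define k where "k = n + c + 3"
  have len: "length A = k" "length E = k" by (simp_all add: A_def E_def k_def)
  have kk: "1 < k" "n + 2 < k" by (simp_all add: k_def)
  have XD: "nc_add (nc_mon A) (nc_mon E) \<in> D" using X by (simp add: A_def E_def)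
  have Xh: "homogeneous_of k (nc_add (nc_mon A) (nc_mon E))" using len by (intro hom_add hom_mon) auto
  have sA: "sw 1 (n+2) A = uv_word (Suc n + 1) (c + 1)"
    using rep_upd[of n True "replicate c False" False] rep_nth[of n True "replicate c False"]
    by (simp add: sw_def A_def uv_word_def)
  have sE: "sw 1 (n+2) E = vu_word (Suc n + 1) (c + 1)"
    using rep_upd[of n False "replicate c True" True] rep_nth[of n False "replicate c True"]
    by (simp add: sw_def E_def vu_word_def)
  have "sym_act k (transpose 1 (n+2)) (nc_add (nc_mon A) (nc_mon E)) = p_poly (Suc n + 1) (c + 1)"
    unfolding sym_act_add sym_act_mon'[OF len(1) kk] sym_act_mon'[OF len(2) kk] sA sE p_poly_def ..
  then show ?thesis using act_closed[OF D XD Xh, of "transpose 1 (n+2)"] kk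
    by (simp add: permutes_swap_id)
qed

theorem mainTheorem4:
  fixes D :: "ncpoly set" and b c :: nat
  assumes "S_subalgebra D"
    and "s_poly 1 \<in> D"
    and "b \<ge> 1"
    and "p_poly b c \<in> D"
  shows "nc_add (nc_mon ([u_letter, v_letter] @ uv_word b c))
                (nc_mon ([v_letter, u_letter] @ vu_word b c)) \<in> D
       \<and> p_poly (b + 1) (c + 1) \<in> D
       \<and> (\<forall>a\<ge>1. s_poly a \<in> D)"
proof -
  obtain n where b: "b = Suc n" using assms(3) by (cases b) auto
  have X: "nc_add (nc_mon (True # False # True # replicate n True @ replicate c False))
                (nc_mon (False # True # False # replicate n False @ replicate c True)) \<in> D"
    using step1[OF assms(1,2)] assms(4) b by simp
  have 1: "nc_add (nc_mon ([u_letter, v_letter] @ uv_word b c))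
                (nc_mon ([v_letter, u_letter] @ vu_word b c)) \<in> D"
    using X b by (simp add: uv_word_def vu_word_def)
  have 2: "p_poly (b + 1) (c + 1) \<in> D" using step2[OF assms(1) X] b by simp
  have 3: "s_poly a \<in> D" if "a \<ge> 1" for a
    using that
  proof (induction a rule: dec_induct)
    case base then show ?case using assms(2) .
  next
    case (step m)
    then obtain j where m: "m = Suc j" by (cases m) auto
    have "p_poly (Suc j) (Suc j) \<in> D" using step.IH m by (simp add: s_poly_def)
    then have "nc_add (nc_mon (True # False # True # replicate j True @ replicate (Suc j) False))
                (nc_mon (False # True # False # replicate j False @ replicate (Suc j) True)) \<in> D"
      using step1[OF assms(1,2)] by blast
    from step2[OF assms(1) this] show ?case using m by (simp add: s_poly_def)
  qed
  show ?thesis using 1 2 3 by blast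
qed

end
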